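(* Let $0<a<1$ and $b>0$. Suppose $w\sim\mathrm{Be}(a,1-a)$, $z\mid w\sim\mathrm{Ga}(b,w)$, $v\mid z,w\sim\mathrm{Ga}(z,1)$ and $u\mid v,z,w\sim\mathrm{Ex}(v)$. Then the marginal density of $u$ is $\pi_{\rm RSB}(u;a,b)$.
   Context: For $a,b>0$, $\pi_{\rm RSB}(u;a,b)=\frac{1}{B(a,b)}\frac{\{\log(1+u)\}^{a-1}}{1+u}\frac{1}{\{1+\log(1+u)\}^{a+b}}$, $u>0$. $\mathrm{Be}(a,1-a)$ is the beta distribution on $(0,1)$; $\mathrm{Ga}(\alpha,\beta)$ is the gamma distribution with shape $\alpha$ and rate $\beta$; $\mathrm{Ex}(v)$ is the exponential distribution with rate $v$. *)

theory Defs
  imports "HOL-Probability.Probability"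
begin

definition beta_density :: "real \<Rightarrow> real \<Rightarrow> real \<Rightarrow> real" where
  "beta_density p q x =
     (if 0 < x \<and> x < 1 then x powr (p - 1) * (1 - x) powr (q - 1) / Beta p q else 0)"

definition gamma_density :: "real \<Rightarrow> real \<Rightarrow> real \<Rightarrow> real" where
  "gamma_density \<alpha> \<beta> x =
     (if 0 < x then \<beta> powr \<alpha> * x powr (\<alpha> - 1) * exp (- \<beta> * x) / Gamma \<alpha> else 0)"

definition pi_RSB :: "real \<Rightarrow> real \<Rightarrow> real \<Rightarrow> real" where
  "pi_RSB u a b =
     (if 0 < u then (1 / Beta a b) * (ln (1 + u)) powr (a - 1) / (1 + u)
                    * (1 / (1 + ln (1 + u)) powr (a + b)) else 0)"

end

theory Submission
  imports Defs
begin


lemma bind_subprob_part: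
  fixes M :: "'a measure" and f :: "'a \<Rightarrow> 'b measure"
  assumes ne: "space M \<noteq> {}" and sets_f: "\<And>x. x \<in> space M \<Longrightarrow> sets (f x) = sets N"
    and meas: "\<And>B. B \<in> sets N \<Longrightarrow> (\<lambda>x. emeasure (f x) B) \<in> borel_measurable M"
    and neN: "space N \<noteq> {}" and ae: "AE x in M. emeasure (f x) (space N) \<le> 1"
  defines "g \<equiv> (\<lambda>x. if emeasure (f x) (space N) \<le> 1 then f x else null_measure N)"
  shows "bind M f = bind M g" and "g \<in> M \<rightarrow>\<^sub>M subprob_algebra N"
proof -
  have sp: "subprob_space (f x) \<longleftrightarrow> emeasure (f x) (space N) \<le> 1" if "x \<in> space M" for x
  proof -
    have "space (f x) = space N" using sets_f[OF that] by (rule sets_eq_imp_space_eq)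
    then show ?thesis using neN by (auto intro: subprob_spaceI dest: subprob_space.emeasure_space_le_1)
  qed
  have subg: "subprob_space (g x)" if "x \<in> space M" for x
    using sp[OF that] neN by (auto simp: g_def intro!: subprob_spaceI)
  have sets_g: "sets (g x) = sets N" if "x \<in> space M" for x
    using sets_f[OF that] by (simp add: g_def)
  have mS: "{x \<in> space M. emeasure (f x) (space N) \<le> 1} \<in> sets M"
    using meas[of "space N"] by measurable
  show gm: "g \<in> M \<rightarrow>\<^sub>M subprob_algebra N"
  proof (rule measurable_subprob_algebra)
    fix B assume B: "B \<in> sets N"
    have "(\<lambda>x. emeasure (g x) B) = (\<lambda>x. if emeasure (f x) (space N) \<le> 1 then emeasure (f x) B else 0)"
      by (auto simp: g_def fun_eq_iff)
    then show "(\<lambda>a. emeasure (g a) B) \<in> borel_measurable M"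
      using meas[OF B] meas[of "space N"] by simp
  qed (use subg sets_g in auto)
  let ?p = "SOME x. x \<in> space M"
  have p: "?p \<in> space M" using ne by (simp add: some_in_eq)
  have SA: "subprob_algebra (f ?p) = subprob_algebra N" "subprob_algebra (g ?p) = subprob_algebra N"
    using sets_f[OF p] sets_g[OF p] by (auto intro: subprob_algebra_cong)
  have "distr M (subprob_algebra N) f = distr M (subprob_algebra N) g"
    unfolding distr_def
  proof (rule measure_of_eq)
    show "sets (subprob_algebra N) \<subseteq> Pow (space (subprob_algebra N))"
      by (rule sets.space_closed)
    fix A assume "A \<in> sigma_sets (space (subprob_algebra N)) (sets (subprob_algebra N))"
    then have A: "A \<in> sets (subprob_algebra N)" by (simp add: sets.sigma_sets_eq)
    have As: "A \<subseteq> space (subprob_algebra N)" using sets.sets_into_space[OF A] .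
    have "f -` A \<inter> space M = g -` A \<inter> space M \<inter> {x \<in> space M. emeasure (f x) (space N) \<le> 1}"
    proof (intro set_eqI iffI)
      fix x assume x: "x \<in> f -` A \<inter> space M"
      then have "f x \<in> space (subprob_algebra N)" using As by auto
      then have "subprob_space (f x)" by (simp add: space_subprob_algebra)
      then show "x \<in> g -` A \<inter> space M \<inter> {x \<in> space M. emeasure (f x) (space N) \<le> 1}"
        using x sp by (auto simp: g_def)
    qed (auto simp: g_def)
    also have "... \<in> sets M"
      using measurable_sets[OF gm A] mS by auto
    finally have fm: "f -` A \<inter> space M \<in> sets M" .
    show "emeasure M (f -` A \<inter> space M) = emeasure M (g -` A \<inter> space M)"
    proof (rule emeasure_eq_AE)
      show "AE x in M. (x \<in> f -` A \<inter> space M) = (x \<in> g -` A \<inter> space M)"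
        using ae by eventually_elim (auto simp: g_def)
    qed (use fm measurable_sets[OF gm A] in auto)
  qed
  then show "bind M f = bind M g"
    unfolding bind_def using ne SA by simp
qed

lemma emeasure_bind_part:
  fixes M :: "'a measure" and f :: "'a \<Rightarrow> 'b measure"
  assumes ne: "space M \<noteq> {}" and sets_f: "\<And>x. x \<in> space M \<Longrightarrow> sets (f x) = sets N"
    and meas: "\<And>B. B \<in> sets N \<Longrightarrow> (\<lambda>x. emeasure (f x) B) \<in> borel_measurable M"
    and neN: "space N \<noteq> {}" and ae: "AE x in M. emeasure (f x) (space N) \<le> 1"
    and B: "B \<in> sets N"
  shows "emeasure (bind M f) B = (\<integral>\<^sup>+x. emeasure (f x) B \<partial>M)"
proof -
  define g where "g = (\<lambda>x. if emeasure (f x) (space N) \<le> 1 then f x else null_measure N)"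
  note bs = bind_subprob_part[OF ne sets_f meas neN ae, folded g_def]
  have "emeasure (bind M f) B = (\<integral>\<^sup>+x. emeasure (g x) B \<partial>M)"
    using bs(1) emeasure_bind[OF ne bs(2) B] by simp
  also have "... = (\<integral>\<^sup>+x. emeasure (f x) B \<partial>M)"
    by (rule nn_integral_cong_AE) (use ae in \<open>auto simp: g_def\<close>)
  finally show ?thesis .
qed


lemma Gamma_real_measurable[measurable]: "(Gamma :: real \<Rightarrow> real) \<in> borel_measurable borel"
proof -
  have "(\<lambda>x::real. inverse (rGamma x)) \<in> borel_measurable borel"
    by (intro borel_measurable_inverse borel_measurable_continuous_onI continuous_on_rGamma)
  then show ?thesis by (simp add: Gamma_def[abs_def])
qed

lemma gamma_density_measurable[measurable]:
  assumes [measurable]: "f \<in> borel_measurable M" "g \<in> borel_measurable M" "h \<in> borel_measurable M"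
  shows "(\<lambda>x. gamma_density (f x) (g x) (h x)) \<in> borel_measurable M"
  unfolding gamma_density_def by measurable

lemma beta_density_measurable[measurable]:
  assumes [measurable]: "h \<in> borel_measurable M"
  shows "(\<lambda>x. beta_density p q (h x)) \<in> borel_measurable M"
  unfolding beta_density_def by measurable

lemma exp_density_measurable[measurable]:
  assumes [measurable]: "f \<in> borel_measurable M" "h \<in> borel_measurable M"
  shows "(\<lambda>x. exponential_density (f x) (h x)) \<in> borel_measurable M"
  unfolding exponential_density_def by measurable


lemma gamma_nn:
  fixes \<alpha> c :: real assumes a: "\<alpha> > 0" and c: "c > 0"
  shows "(\<integral>\<^sup>+x. ennreal (indicator {0<..} x * x powr (\<alpha> - 1) * exp (- c * x)) \<partial>lborel)
         = ennreal (Gamma \<alpha> / c powr \<alpha>)"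
proof -
  have "(\<integral>\<^sup>+x. ennreal (indicator {0<..} x * x powr (\<alpha> - 1) * exp (- c * x)) \<partial>lborel)
     = \<bar>1/c\<bar> * (\<integral>\<^sup>+x. ennreal (indicator {0<..} (0 + 1/c*x) * (0 + 1/c*x) powr (\<alpha> - 1) * exp (- c * (0 + 1/c*x))) \<partial>lborel)"
    by (rule nn_integral_real_affine) (use c in auto)
  also have "(\<integral>\<^sup>+x. ennreal (indicator {0<..} (0 + 1/c*x) * (0 + 1/c*x) powr (\<alpha> - 1) * exp (- c * (0 + 1/c*x))) \<partial>lborel)
     = (\<integral>\<^sup>+x. ennreal (c powr (1 - \<alpha>)) * ennreal (indicator {0..} x * x powr (\<alpha> - 1) / exp x) \<partial>lborel)"
  proof (intro nn_integral_cong)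
    fix x :: real
    show "ennreal (indicator {0<..} (0 + 1/c*x) * (0 + 1/c*x) powr (\<alpha> - 1) * exp (- c * (0 + 1/c*x)))
        = ennreal (c powr (1 - \<alpha>)) * ennreal (indicator {0..} x * x powr (\<alpha> - 1) / exp x)"
    proof (cases "x > 0")
      case True
      have "(1/c*x) powr (\<alpha> - 1) = c powr (1 - \<alpha>) * x powr (\<alpha> - 1)"
      proof -
        have "(1/c*x) powr (\<alpha> - 1) = (1/c) powr (\<alpha> - 1) * x powr (\<alpha> - 1)"
          using c True powr_mult[of "1/c" x "\<alpha> - 1"] by simp
        moreover have "(1/c) powr (\<alpha> - 1) = 1 / c powr (\<alpha> - 1)"
          using c by (simp add: powr_divide)
        moreover have "c powr (1 - \<alpha>) = 1 / c powr (\<alpha> - 1)"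
          using powr_minus_divide[of c "\<alpha> - 1"] by simp
        ultimately show ?thesis by simp
      qed
      then show ?thesis using True c
        by (simp add: ennreal_mult'[symmetric] indicator_def exp_minus field_simps)
    next
      case False
      then show ?thesis using c by (auto simp: indicator_def zero_less_mult_iff zero_less_divide_iff)
    qed
  qed
  also have "... = ennreal (c powr (1 - \<alpha>)) * ennreal (Gamma \<alpha>)"
    by (subst nn_integral_cmult) (simp_all add: Gamma_conv_nn_integral_real[OF a])
  finally show ?thesis
    using c a Gamma_real_pos[OF a]
    by (simp add: ennreal_mult'[symmetric] abs_of_pos powr_diff field_simps powr_minus_divide)
qed

lemma gamma_density_int:
  assumes a: "\<alpha> > 0" and b: "\<beta> > 0"
  shows "(\<integral>\<^sup>+x. ennreal (gamma_density \<alpha> \<beta> x) \<partial>lborel) = 1"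
proof -
  have "(\<integral>\<^sup>+x. ennreal (gamma_density \<alpha> \<beta> x) \<partial>lborel)
     = (\<integral>\<^sup>+x. ennreal (\<beta> powr \<alpha> / Gamma \<alpha>) * ennreal (indicator {0<..} x * x powr (\<alpha> - 1) * exp (- \<beta> * x)) \<partial>lborel)"
    using a b Gamma_real_pos[OF a]
    by (intro nn_integral_cong) (auto simp: gamma_density_def ennreal_mult'[symmetric] indicator_def)
  also have "... = ennreal (\<beta> powr \<alpha> / Gamma \<alpha>) * ennreal (Gamma \<alpha> / \<beta> powr \<alpha>)"
    by (subst nn_integral_cmult) (use gamma_nn[OF a b] in simp_all)
  also have "... = 1"
    using a b Gamma_real_pos[OF a] by (simp add: ennreal_mult'[symmetric] order.strict_iff_not)
  finally show ?thesis .
qed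

lemma swap_int:
  fixes h :: "real \<Rightarrow> real \<Rightarrow> ennreal" and p :: "real \<Rightarrow> ennreal"
  assumes [measurable]: "(\<lambda>(x,u). h x u) \<in> borel_measurable (lborel \<Otimes>\<^sub>M lborel)" "p \<in> borel_measurable lborel" "B \<in> sets borel"
  shows "(\<integral>\<^sup>+x. p x * (\<integral>\<^sup>+u. h x u * indicator B u \<partial>lborel) \<partial>lborel)
       = (\<integral>\<^sup>+u. (\<integral>\<^sup>+x. p x * h x u \<partial>lborel) * indicator B u \<partial>lborel)"
proof -
  have "(\<integral>\<^sup>+x. p x * (\<integral>\<^sup>+u. h x u * indicator B u \<partial>lborel) \<partial>lborel)
      = (\<integral>\<^sup>+x. (\<integral>\<^sup>+u. p x * (h x u * indicator B u) \<partial>lborel) \<partial>lborel)"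
    by (intro nn_integral_cong nn_integral_cmult[symmetric]) measurable
  also have "... = (\<integral>\<^sup>+u. (\<integral>\<^sup>+x. p x * (h x u * indicator B u) \<partial>lborel) \<partial>lborel)"
    by (rule lborel_pair.Fubini') measurable
  also have "... = (\<integral>\<^sup>+u. (\<integral>\<^sup>+x. p x * h x u \<partial>lborel) * indicator B u \<partial>lborel)"
    by (intro nn_integral_cong) (simp add: nn_integral_multc[symmetric] mult.assoc)
  finally show ?thesis .
qed


definition Kmeas :: "real \<Rightarrow> real measure" where
  "Kmeas z = density lborel (\<lambda>v. ennreal (gamma_density z 1 v)) \<bind>
               (\<lambda>v. density lborel (\<lambda>u. ennreal (exponential_density v u)))"

definition Fmeas :: "real \<Rightarrow> real \<Rightarrow> real measure" where
  "Fmeas b w = density lborel (\<lambda>z. ennreal (gamma_density b w z)) \<bind> Kmeas"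

lemma L_E:
  assumes "B \<in> sets borel"
  shows "emeasure (density lborel (\<lambda>u. ennreal (exponential_density v u))) B
       = (\<integral>\<^sup>+u. ennreal (exponential_density v u) * indicator B u \<partial>lborel)"
  using assms by (subst emeasure_density) auto

lemma L_E1: "emeasure (density lborel (\<lambda>u. ennreal (exponential_density v u))) UNIV \<le> 1"
proof (cases "v > 0")
  case True
  then interpret prob_space "density lborel (\<lambda>u. ennreal (exponential_density v u))"
    by (rule prob_space_exponential_density)
  show ?thesis using emeasure_space_1 by simp
next
  case False
  then have "(\<lambda>u. ennreal (exponential_density v u)) = (\<lambda>_. 0)"
    by (auto simp: exponential_density_def fun_eq_iff mult_nonpos_nonneg ennreal_eq_0_iff)
  then show ?thesis by (simp add: emeasure_density)
qed

lemma sets_Kmeas[simp]: "sets (Kmeas z) = sets borel"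
  unfolding Kmeas_def by (subst sets_bind[where N=borel]) auto

lemma sets_Fmeas[simp]: "sets (Fmeas b w) = sets borel"
  unfolding Fmeas_def by (subst sets_bind[where N=borel]) auto

lemma L_K:
  assumes B: "B \<in> sets borel"
  shows "emeasure (Kmeas z) B = (\<integral>\<^sup>+v. ennreal (gamma_density z 1 v) *
            (\<integral>\<^sup>+u. ennreal (exponential_density v u) * indicator B u \<partial>lborel) \<partial>lborel)"
proof -
  have "emeasure (Kmeas z) B = (\<integral>\<^sup>+v. emeasure (density lborel (\<lambda>u. ennreal (exponential_density v u))) B
           \<partial>density lborel (\<lambda>v. ennreal (gamma_density z 1 v)))"
    unfolding Kmeas_def
  proof (rule emeasure_bind_part[where N=lborel])
    fix B' :: "real set" assume "B' \<in> sets lborel"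
    then have [measurable]: "B' \<in> sets borel" by simp
    have "(\<lambda>v. \<integral>\<^sup>+u. ennreal (exponential_density v u) * indicator B' u \<partial>lborel) \<in> borel_measurable lborel"
      by measurable
    then show "(\<lambda>v. emeasure (density lborel (\<lambda>u. ennreal (exponential_density v u))) B')
        \<in> borel_measurable (density lborel (\<lambda>v. ennreal (gamma_density z 1 v)))"
      by (simp add: L_E)
  next
    show "AE v in density lborel (\<lambda>v. ennreal (gamma_density z 1 v)).
        emeasure (density lborel (\<lambda>u. ennreal (exponential_density v u))) (space lborel) \<le> 1"
      using L_E1 by simp
  qed (use B in auto)
  also have "... = (\<integral>\<^sup>+v. ennreal (gamma_density z 1 v) *
            (\<integral>\<^sup>+u. ennreal (exponential_density v u) * indicator B u \<partial>lborel) \<partial>lborel)"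
    using B by (subst nn_integral_density) (auto simp: L_E)
  finally show ?thesis .
qed

lemma L_K1:
  assumes z: "z > 0"
  shows "emeasure (Kmeas z) UNIV \<le> 1"
proof -
  have "emeasure (Kmeas z) UNIV = (\<integral>\<^sup>+v. ennreal (gamma_density z 1 v) *
            emeasure (density lborel (\<lambda>u. ennreal (exponential_density v u))) UNIV \<partial>lborel)"
    by (subst L_K) (auto simp: L_E)
  also have "... \<le> (\<integral>\<^sup>+v. ennreal (gamma_density z 1 v) * 1 \<partial>lborel)"
    by (intro nn_integral_mono mult_left_mono L_E1) auto
  also have "... = 1" using gamma_density_int[OF z, of 1] by simp
  finally show ?thesis .
qed

lemma L_F0:
  assumes B: "B \<in> sets borel"
  shows "emeasure (Fmeas b w) B = (\<integral>\<^sup>+z. ennreal (gamma_density b w z) * emeasure (Kmeas z) B \<partial>lborel)"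
proof -
  have "emeasure (Fmeas b w) B = (\<integral>\<^sup>+z. emeasure (Kmeas z) B
           \<partial>density lborel (\<lambda>z. ennreal (gamma_density b w z)))"
    unfolding Fmeas_def
  proof (rule emeasure_bind_part[where N=lborel])
    fix B' :: "real set" assume "B' \<in> sets lborel"
    then have [measurable]: "B' \<in> sets borel" by simp
    have "(\<lambda>z. \<integral>\<^sup>+v. ennreal (gamma_density z 1 v) *
            (\<integral>\<^sup>+u. ennreal (exponential_density v u) * indicator B' u \<partial>lborel) \<partial>lborel) \<in> borel_measurable lborel"
      by measurable
    then show "(\<lambda>z. emeasure (Kmeas z) B')
        \<in> borel_measurable (density lborel (\<lambda>z. ennreal (gamma_density b w z)))"
      by (simp add: L_K)
  next
    have "AE z in lborel. 0 < ennreal (gamma_density b w z) \<longrightarrow> emeasure (Kmeas z) (space lborel) \<le> 1"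
      using L_K1 by (intro AE_I2) (auto simp: gamma_density_def split: if_splits)
    then show "AE z in density lborel (\<lambda>z. ennreal (gamma_density b w z)).
        emeasure (Kmeas z) (space lborel) \<le> 1"
      by (subst AE_density) auto
  qed (use B in auto)
  also have "... = (\<integral>\<^sup>+z. ennreal (gamma_density b w z) * emeasure (Kmeas z) B \<partial>lborel)"
    using B by (subst nn_integral_density) (auto simp: L_K)
  finally show ?thesis .
qed

lemma L_F1:
  assumes w: "w > 0" and b: "b > 0"
  shows "emeasure (Fmeas b w) UNIV \<le> 1"
proof -
  have "emeasure (Fmeas b w) UNIV = (\<integral>\<^sup>+z. ennreal (gamma_density b w z) * emeasure (Kmeas z) UNIV \<partial>lborel)"
    by (subst L_F0) auto
  also have "... \<le> (\<integral>\<^sup>+z. ennreal (gamma_density b w z) * 1 \<partial>lborel)"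
  proof (intro nn_integral_mono)
    fix z :: real
    show "ennreal (gamma_density b w z) * emeasure (Kmeas z) UNIV \<le> ennreal (gamma_density b w z) * 1"
    proof (cases "z > 0")
      case True then show ?thesis by (intro mult_left_mono L_K1) auto
    qed (auto simp: gamma_density_def)
  qed
  also have "... = 1" using gamma_density_int[OF b w] by simp
  finally show ?thesis .
qed

lemma L_T0:
  assumes B: "B \<in> sets borel" and a: "0 < a" and b: "b > 0"
  shows "emeasure (density lborel (\<lambda>w. ennreal (beta_density a (1 - a) w)) \<bind> Fmeas b) B
     = (\<integral>\<^sup>+w. ennreal (beta_density a (1 - a) w) * emeasure (Fmeas b w) B \<partial>lborel)"
proof -
  have "emeasure (density lborel (\<lambda>w. ennreal (beta_density a (1 - a) w)) \<bind> Fmeas b) B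
     = (\<integral>\<^sup>+w. emeasure (Fmeas b w) B \<partial>density lborel (\<lambda>w. ennreal (beta_density a (1 - a) w)))"
  proof (rule emeasure_bind_part[where N=lborel])
    fix B' :: "real set" assume "B' \<in> sets lborel"
    then have [measurable]: "B' \<in> sets borel" by simp
    have "(\<lambda>w. \<integral>\<^sup>+z. ennreal (gamma_density b w z) * (\<integral>\<^sup>+v. ennreal (gamma_density z 1 v) *
            (\<integral>\<^sup>+u. ennreal (exponential_density v u) * indicator B' u \<partial>lborel) \<partial>lborel) \<partial>lborel)
          \<in> borel_measurable lborel"
      by measurable
    then show "(\<lambda>w. emeasure (Fmeas b w) B')
        \<in> borel_measurable (density lborel (\<lambda>w. ennreal (beta_density a (1 - a) w)))"
      by (simp add: L_F0 L_K)
  next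
    have "AE w in lborel. 0 < ennreal (beta_density a (1 - a) w) \<longrightarrow> emeasure (Fmeas b w) (space lborel) \<le> 1"
      using L_F1 b by (intro AE_I2) (auto simp: beta_density_def split: if_splits)
    then show "AE w in density lborel (\<lambda>w. ennreal (beta_density a (1 - a) w)).
        emeasure (Fmeas b w) (space lborel) \<le> 1"
      by (subst AE_density) auto
  qed (use B in auto)
  also have "... = (\<integral>\<^sup>+w. ennreal (beta_density a (1 - a) w) * emeasure (Fmeas b w) B \<partial>lborel)"
    using B by (subst nn_integral_density) (auto simp: L_F0 L_K)
  finally show ?thesis .
qed


lemma P1:
  assumes z: "z > 0" and u: "u \<ge> 0"
  shows "(\<integral>\<^sup>+v. ennreal (gamma_density z 1 v) * ennreal (exponential_density v u) \<partial>lborel)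
       = ennreal (z / (1 + u) powr (z + 1))"
proof -
  have Gz: "Gamma z > 0" using Gamma_real_pos[OF z] .
  have eq: "ennreal (gamma_density z 1 v) * ennreal (exponential_density v u)
      = ennreal (1 / Gamma z) * ennreal (indicator {0<..} v * v powr (z + 1 - 1) * exp (- (1 + u) * v))" for v
  proof (cases "v > 0")
    case True
    have p: "v powr (z - 1) * v = v powr z" using True by (simp add: powr_diff)
    have e: "exp (- v) * exp (- (v * u)) = exp (- ((1 + u) * v))"
      by (simp add: exp_add[symmetric] algebra_simps)
    have "gamma_density z 1 v * exponential_density v u
        = 1 / Gamma z * (v powr (z - 1) * v) * (exp (- v) * exp (- (v * u)))"
      using True u by (simp add: gamma_density_def exponential_density_def)
    also have "... = 1 / Gamma z * (indicator {0<..} v * v powr (z + 1 - 1) * exp (- (1 + u) * v))"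
      using True by (simp only: p e) (simp add: algebra_simps)
    finally show ?thesis
      using True u Gz by (simp add: ennreal_mult'[symmetric] gamma_density_def exponential_density_def)
  qed (simp add: gamma_density_def)
  have "(\<integral>\<^sup>+v. ennreal (gamma_density z 1 v) * ennreal (exponential_density v u) \<partial>lborel)
      = ennreal (1 / Gamma z) * ennreal (Gamma (z + 1) / (1 + u) powr (z + 1))"
    unfolding eq
    apply (subst nn_integral_cmult)
     apply measurable
    apply (subst gamma_nn[of "z + 1" "1 + u"])
    using z u by auto
  also have "... = ennreal (z / (1 + u) powr (z + 1))"
  proof -
    have "z \<notin> \<int>\<^sub>\<le>\<^sub>0" using z by (auto elim!: nonpos_Ints_cases)
    then show ?thesis using Gz z by (simp add: ennreal_mult'[symmetric] Gamma_plus1 Gamma_eq_zero_iff)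
  qed
  finally show ?thesis .
qed

lemma P2:
  assumes w: "w > 0" and u: "u \<ge> 0" and b: "b > 0"
  shows "(\<integral>\<^sup>+z. ennreal (gamma_density b w z) * ennreal (z / (1 + u) powr (z + 1)) \<partial>lborel)
       = ennreal (b * w powr b / ((1 + u) * (w + ln (1 + u)) powr (b + 1)))"
proof -
  define L where "L = ln (1 + u)"
  have L: "L \<ge> 0" using u by (simp add: L_def)
  have Gb: "Gamma b > 0" using Gamma_real_pos[OF b] .
  have eq: "ennreal (gamma_density b w z) * ennreal (z / (1 + u) powr (z + 1))
      = ennreal (w powr b / (Gamma b * (1 + u))) * ennreal (indicator {0<..} z * z powr (b + 1 - 1) * exp (- (w + L) * z))" for z
  proof (cases "z > 0")
    case True
    have p: "z powr (b - 1) * z = z powr b" using True by (simp add: powr_diff)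
    have q: "(1 + u) powr (z + 1) = exp (z * L) * (1 + u)"
      using u by (simp add: powr_def L_def exp_add algebra_simps)
    have e: "exp (- (w * z)) / exp (z * L) = exp (- (w + L) * z)"
      by (simp add: exp_diff[symmetric] algebra_simps)
    have "gamma_density b w z * (z / (1 + u) powr (z + 1))
        = w powr b / (Gamma b * (1 + u)) * (z powr (b - 1) * z) * (exp (- (w * z)) / exp (z * L))"
      using True u by (simp add: gamma_density_def q mult_ac)
    also have "... = w powr b / (Gamma b * (1 + u)) * (indicator {0<..} z * z powr (b + 1 - 1) * exp (- (w + L) * z))"
      using True by (simp only: p e) simp
    finally show ?thesis
      using True u Gb w by (simp add: ennreal_mult'[symmetric] gamma_density_def)
  qed (simp add: gamma_density_def)
  have "(\<integral>\<^sup>+z. ennreal (gamma_density b w z) * ennreal (z / (1 + u) powr (z + 1)) \<partial>lborel)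
      = ennreal (w powr b / (Gamma b * (1 + u))) * ennreal (Gamma (b + 1) / (w + L) powr (b + 1))"
    unfolding eq
    apply (subst nn_integral_cmult)
     apply measurable
    apply (subst gamma_nn[of "b + 1" "w + L"])
    using b w L by auto
  also have "... = ennreal (b * w powr b / ((1 + u) * (w + ln (1 + u)) powr (b + 1)))"
  proof -
    have "b \<notin> \<int>\<^sub>\<le>\<^sub>0" using b by (auto elim!: nonpos_Ints_cases)
    then show ?thesis using Gb b w u
      by (simp add: ennreal_mult'[symmetric] Gamma_plus1 Gamma_eq_zero_iff L_def)
  qed
  finally show ?thesis .
qed


lemma sub_pw:
  fixes L s \<alpha> \<beta> :: real
  assumes L: "L > 0" and s: "0 < s" "s < 1"
  defines "t \<equiv> L * s / (1 + L - s)"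
  shows "t powr (\<alpha> - 1) * (1 - t) powr (\<beta> - 1) * (t + L) powr (- (\<alpha> + \<beta>)) * (L * (1 + L) / (1 + L - s)^2)
       = s powr (\<alpha> - 1) * (1 - s) powr (\<beta> - 1) * L powr (- \<beta>) * (1 + L) powr (- \<alpha>)"
proof -
  define D where "D = 1 + L - s"
  have D: "D > 0" using L s by (simp add: D_def)
  have t: "t = L * s / D" by (simp add: t_def D_def)
  have t1: "1 - t = (1 + L) * (1 - s) / D" using D by (simp add: t D_def field_simps)
  have t2: "t + L = L * (1 + L) / D" using D by (simp add: t D_def field_simps)
  have tp: "t > 0" using L s D by (simp add: t)
  have t1p: "1 - t > 0" using L s D by (simp add: t1)
  have t2p: "t + L > 0" using tp L by simp
  have lt: "ln t = ln L + ln s - ln D" using L s D by (simp add: t ln_div ln_mult)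
  have lt1: "ln (1 - t) = ln (1 + L) + ln (1 - s) - ln D" using L s D by (simp add: t1 ln_div ln_mult)
  have lt2: "ln (t + L) = ln L + ln (1 + L) - ln D" using L s D by (simp add: t2 ln_div ln_mult)
  have g: "L * (1 + L) / D^2 = exp (ln L + ln (1 + L) - 2 * ln D)"
  proof -
    have "exp (2 * ln D) = exp (ln D) * exp (ln D)" by (simp add: exp_add[symmetric])
    then have "exp (2 * ln D) = D^2" using D by (simp add: power2_eq_square)
    then show ?thesis using L D by (simp add: exp_add exp_diff)
  qed
  have "t powr (\<alpha> - 1) * (1 - t) powr (\<beta> - 1) * (t + L) powr (- (\<alpha> + \<beta>)) * (L * (1 + L) / D^2)
      = exp ((\<alpha> - 1) * ln t + (\<beta> - 1) * ln (1 - t) + (- (\<alpha> + \<beta>)) * ln (t + L) + (ln L + ln (1 + L) - 2 * ln D))"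
    using tp t1p t2p unfolding g by (simp add: powr_def exp_add)
  also have "(\<alpha> - 1) * ln t + (\<beta> - 1) * ln (1 - t) + (- (\<alpha> + \<beta>)) * ln (t + L) + (ln L + ln (1 + L) - 2 * ln D)
      = (\<alpha> - 1) * ln s + (\<beta> - 1) * ln (1 - s) + (- \<beta>) * ln L + (- \<alpha>) * ln (1 + L)"
    unfolding lt lt1 lt2 by (simp add: algebra_simps)
  also have "exp ((\<alpha> - 1) * ln s + (\<beta> - 1) * ln (1 - s) + (- \<beta>) * ln L + (- \<alpha>) * ln (1 + L))
      = s powr (\<alpha> - 1) * (1 - s) powr (\<beta> - 1) * L powr (- \<beta>) * (1 + L) powr (- \<alpha>)"
    using L s by (simp add: powr_def exp_add[symmetric] algebra_simps)
  finally show ?thesis by (simp add: D_def)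
qed

lemma beta_nn:
  fixes \<alpha> \<beta> :: real assumes a: "\<alpha> > 0" and b: "\<beta> > 0"
  shows "(\<integral>\<^sup>+s. ennreal (indicator {0..1} s * s powr (\<alpha> - 1) * (1 - s) powr (\<beta> - 1)) \<partial>lborel) = ennreal (Beta \<alpha> \<beta>)"
proof -
  have "(\<integral>\<^sup>+s. ennreal (s powr (\<alpha> - 1) * (1 - s) powr (\<beta> - 1)) * indicator {0..1} s \<partial>lborel) = ennreal (Beta \<alpha> \<beta>)"
    by (rule nn_integral_has_integral_lebesgue'[OF _ has_integral_Beta_real[OF a b]]) auto
  then show ?thesis
    by (simp add: indicator_mult_ennreal mult.commute mult.left_commute)
qed

lemma beta_sub:
  fixes L \<alpha> \<beta> :: real
  assumes L: "L > 0" and a: "\<alpha> > 0" and b: "\<beta> > 0"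
  shows "(\<integral>\<^sup>+x. ennreal (indicator {0<..<1} x * x powr (\<alpha> - 1) * (1 - x) powr (\<beta> - 1) * (x + L) powr (- (\<alpha> + \<beta>))) \<partial>lborel)
       = ennreal (Beta \<alpha> \<beta> * (L powr (- \<beta>) * (1 + L) powr (- \<alpha>)))"
proof -
  define F where "F = (\<lambda>x::real. ennreal (indicator {0<..<1} x * x powr (\<alpha> - 1) * (1 - x) powr (\<beta> - 1) * (x + L) powr (- (\<alpha> + \<beta>))))"
  define g where "g = (\<lambda>s::real. L * s / (1 + L - s))"
  define g' where "g' = (\<lambda>s::real. L * (1 + L) / (1 + L - s)^2)"
  define C where "C = L powr (- \<beta>) * (1 + L) powr (- \<alpha>)"
  have [measurable]: "F \<in> borel_measurable borel" unfolding F_def by measurable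
  have Bpos: "Beta \<alpha> \<beta> > 0" using Gamma_real_pos a b by (simp add: Beta_def)
  have g01: "g 0 = 0" "g 1 = 1" using L by (auto simp: g_def)
  have deriv: "(g has_real_derivative g' s) (at s)" if "s \<in> {0..1}" for s
  proof -
    have "1 + L - s \<noteq> 0" using that L by auto
    then show ?thesis unfolding g_def g'_def
      by (auto intro!: derivative_eq_intros simp: field_simps power2_eq_square)
  qed
  have cont: "continuous_on {0..1} g'"
    unfolding g'_def using L by (intro continuous_intros) auto
  have nonneg: "g' s \<ge> 0" for s using L by (simp add: g'_def)
  have "(\<integral>\<^sup>+x. F x * indicator {g 0..g 1} x \<partial>lborel) = (\<integral>\<^sup>+s. F (g s) * g' s * indicator {0..1} s \<partial>lborel)"
    by (rule nn_integral_substitution_aux[OF _ _ deriv cont]) (auto simp: nonneg)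
  also have "(\<lambda>x. F x * indicator {g 0..g 1} x) = F"
    by (auto simp: g01 F_def fun_eq_iff indicator_def)
  also have "(\<lambda>s. F (g s) * ennreal (g' s) * indicator {0..1} s)
      = (\<lambda>s. ennreal C * ennreal (indicator {0..1} s * s powr (\<alpha> - 1) * (1 - s) powr (\<beta> - 1)))"
  proof
    fix s :: real
    show "F (g s) * ennreal (g' s) * indicator {0..1} s = ennreal C * ennreal (indicator {0..1} s * s powr (\<alpha> - 1) * (1 - s) powr (\<beta> - 1))"
    proof (cases "0 < s \<and> s < 1")
      case True
      have D: "1 + L - s > 0" using True L by auto
      have "L * s < L * 1" using True L by (intro mult_strict_left_mono) auto
      then have "s + L * s < 1 + L" using True by linarith
      then have gs: "0 < g s" "g s < 1" using True L D by (auto simp: g_def field_simps)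
      have "F (g s) * ennreal (g' s) = ennreal (g s powr (\<alpha> - 1) * (1 - g s) powr (\<beta> - 1) * (g s + L) powr (- (\<alpha> + \<beta>)) * g' s)"
        using gs L D by (simp add: F_def ennreal_mult'[symmetric] g'_def)
      also have "g s powr (\<alpha> - 1) * (1 - g s) powr (\<beta> - 1) * (g s + L) powr (- (\<alpha> + \<beta>)) * g' s
          = s powr (\<alpha> - 1) * (1 - s) powr (\<beta> - 1) * L powr (- \<beta>) * (1 + L) powr (- \<alpha>)"
        unfolding g_def g'_def by (rule sub_pw[OF L True[THEN conjunct1] True[THEN conjunct2]])
      finally show ?thesis using True
        by (simp add: ennreal_mult'[symmetric] C_def mult_ac)
    next
      case False
      then consider "s < 0 \<or> s > 1" | "s = 0" | "s = 1" by linarith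
      then show ?thesis
      proof cases
        case 1 then show ?thesis by (auto simp: indicator_def)
      next
        case 2 then show ?thesis using a g01(1) by (simp add: F_def)
      next
        case 3 then show ?thesis using b g01(2) by (simp add: F_def)
      qed
    qed
  qed
  also have "(\<integral>\<^sup>+s. ennreal C * ennreal (indicator {0..1} s * s powr (\<alpha> - 1) * (1 - s) powr (\<beta> - 1)) \<partial>lborel)
      = ennreal C * ennreal (Beta \<alpha> \<beta>)"
    by (subst nn_integral_cmult) (auto simp: beta_nn[OF a b])
  finally show ?thesis
    using L Bpos by (simp add: F_def C_def ennreal_mult'[symmetric] mult_ac)
qed

lemma P3:
  fixes a b u :: real
  assumes a: "0 < a" "a < 1" and b: "b > 0" and u: "u > 0"
  shows "(\<integral>\<^sup>+w. ennreal (beta_density a (1 - a) w) * ennreal (b * w powr b / ((1 + u) * (w + ln (1 + u)) powr (b + 1))) \<partial>lborel)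
       = ennreal (pi_RSB u a b)"
proof -
  define L where "L = ln (1 + u)"
  have L: "L > 0" using u by (simp add: L_def)
  have Ga: "Gamma a > 0" "Gamma (1 - a) > 0" "Gamma b > 0" "Gamma (a + b) > 0"
    using a b by (auto intro!: Gamma_real_pos)
  have B1: "Beta a (1 - a) = Gamma a * Gamma (1 - a)" by (simp add: Beta_def)
  have bn: "b \<notin> \<int>\<^sub>\<le>\<^sub>0" using b by (auto elim!: nonpos_Ints_cases)
  have B2: "Beta (a + b) (1 - a) = Gamma (a + b) * Gamma (1 - a) / (b * Gamma b)"
    using Gamma_plus1[OF bn] by (simp add: Beta_def add.commute)
  define K where "K = b / ((1 + u) * Beta a (1 - a))"
  have Kpos: "K > 0" using Ga b u by (simp add: K_def B1)
  have eq: "ennreal (beta_density a (1 - a) w) * ennreal (b * w powr b / ((1 + u) * (w + L) powr (b + 1)))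
     = ennreal K * ennreal (indicator {0<..<1} w * w powr (a + b - 1) * (1 - w) powr (1 - a - 1) * (w + L) powr (- ((a + b) + (1 - a))))" for w
  proof (cases "0 < w \<and> w < 1")
    case True
    have p1: "w powr (a - 1) * w powr b = w powr (a + b - 1)" using True by (simp add: powr_add[symmetric] algebra_simps)
    have p2: "1 / (w + L) powr (b + 1) = (w + L) powr (- ((a + b) + (1 - a)))"
      using powr_minus_divide[of "w + L" "b + 1"] by (simp add: algebra_simps)
    have "beta_density a (1 - a) w * (b * w powr b / ((1 + u) * (w + L) powr (b + 1)))
        = K * ((w powr (a - 1) * w powr b) * (1 - w) powr (1 - a - 1) * (1 / (w + L) powr (b + 1)))"
      using True by (simp add: beta_density_def K_def field_simps)
    also have "... = K * (indicator {0<..<1} w * w powr (a + b - 1) * (1 - w) powr (1 - a - 1) * (w + L) powr (- ((a + b) + (1 - a))))"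
      using True by (simp only: p1 p2) simp
    finally have r: "beta_density a (1 - a) w * (b * w powr b / ((1 + u) * (w + L) powr (b + 1))) = K * (indicator {0<..<1} w * w powr (a + b - 1) * (1 - w) powr (1 - a - 1) * (w + L) powr (- ((a + b) + (1 - a))))" .
    have bd: "beta_density a (1 - a) w \<ge> 0" using Ga by (simp add: beta_density_def B1)
    show ?thesis
      unfolding ennreal_mult'[OF bd, symmetric] ennreal_mult'[OF less_imp_le[OF Kpos], symmetric] r ..
  qed (auto simp: beta_density_def)
  have "(\<integral>\<^sup>+w. ennreal (beta_density a (1 - a) w) * ennreal (b * w powr b / ((1 + u) * (w + ln (1 + u)) powr (b + 1))) \<partial>lborel)
      = ennreal K * ennreal (Beta (a + b) (1 - a) * (L powr (- (1 - a)) * (1 + L) powr (- (a + b))))"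
    unfolding L_def[symmetric] eq
    apply (subst nn_integral_cmult)
     apply measurable
    apply (subst beta_sub[OF L])
    using a b by auto
  also have "... = ennreal (pi_RSB u a b)"
  proof -
    have "K * (Beta (a + b) (1 - a) * (L powr (- (1 - a)) * (1 + L) powr (- (a + b))))
        = (1 / Beta a b) * L powr (a - 1) / (1 + u) * (1 / (1 + L) powr (a + b))"
    proof -
      have G1: "Gamma (1 + b) = b * Gamma b" using Gamma_plus1[OF bn] by (simp add: add.commute)
      have P: "(1 + L) powr (- a - b) = 1 / (1 + L) powr (a + b)"
        using powr_minus_divide[of "1 + L" "a + b"] by (simp add: algebra_simps)
      have pp: "(1 + L) powr (a + b) > 0" using L by simp
      have d: "Gamma a * Gamma b * Gamma (1 - a) * (1 + L) powr (a + b) * (1 + u) \<noteq> 0"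
        using Ga pp u by simp
      show ?thesis using Ga b u L pp d
        apply (simp add: K_def B1 Beta_def G1 P)
        apply (simp add: divide_simps)
        apply (simp add: algebra_simps G1)
        done
    qed
    then show ?thesis using Kpos Ga b u L
      by (simp add: ennreal_mult'[symmetric] pi_RSB_def L_def B2)
  qed
  finally show ?thesis .
qed


theorem mainTheorem3:
  fixes a b :: real
  assumes "0 < a" "a < 1" "0 < b"
  shows "(density lborel (\<lambda>w. ennreal (beta_density a (1 - a) w)) \<bind>
           (\<lambda>w. density lborel (\<lambda>z. ennreal (gamma_density b w z)) \<bind>
             (\<lambda>z. density lborel (\<lambda>v. ennreal (gamma_density z 1 v)) \<bind>
               (\<lambda>v. density lborel (\<lambda>u. ennreal (exponential_density v u))))))
         = density lborel (\<lambda>u. ennreal (pi_RSB u a b))"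
proof -
  note a = assms(1,2) and b = assms(3)
  define k where "k = (\<lambda>z u. \<integral>\<^sup>+v. ennreal (gamma_density z 1 v) * ennreal (exponential_density v u) \<partial>lborel)"
  define f where "f = (\<lambda>w u. \<integral>\<^sup>+z. ennreal (gamma_density b w z) * k z u \<partial>lborel)"
  define t where "t = (\<lambda>u. \<integral>\<^sup>+w. ennreal (beta_density a (1 - a) w) * f w u \<partial>lborel)"
  have pim[measurable]: "(\<lambda>u. pi_RSB u a b) \<in> borel_measurable borel"
    unfolding pi_RSB_def by measurable
  have km[measurable]: "(\<lambda>(z, u). k z u) \<in> borel_measurable (lborel \<Otimes>\<^sub>M lborel)"
    unfolding k_def by measurable
  have fm[measurable]: "(\<lambda>(w, u). f w u) \<in> borel_measurable (lborel \<Otimes>\<^sub>M lborel)"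
    unfolding f_def k_def by measurable
  have t_eq: "t u = ennreal (pi_RSB u a b)" if u: "u \<noteq> 0" for u
  proof (cases "u > 0")
    case True
    have "f w u = ennreal (b * w powr b / ((1 + u) * (w + ln (1 + u)) powr (b + 1)))" if w: "w > 0" for w
    proof -
      have "f w u = (\<integral>\<^sup>+z. ennreal (gamma_density b w z) * ennreal (z / (1 + u) powr (z + 1)) \<partial>lborel)"
        unfolding f_def
      proof (intro nn_integral_cong)
        fix z :: real
        show "ennreal (gamma_density b w z) * k z u = ennreal (gamma_density b w z) * ennreal (z / (1 + u) powr (z + 1))"
        proof (cases "z > 0")
          case True then show ?thesis using \<open>u > 0\<close> by (simp add: k_def P1)
        qed (simp add: gamma_density_def)
      qed
      also have "... = ennreal (b * w powr b / ((1 + u) * (w + ln (1 + u)) powr (b + 1)))"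
        using P2[OF w _ b] True by simp
      finally show ?thesis .
    qed
    then have "t u = (\<integral>\<^sup>+w. ennreal (beta_density a (1 - a) w) * ennreal (b * w powr b / ((1 + u) * (w + ln (1 + u)) powr (b + 1))) \<partial>lborel)"
      unfolding t_def by (intro nn_integral_cong) (auto simp: beta_density_def)
    also have "... = ennreal (pi_RSB u a b)" by (rule P3[OF a b True])
    finally show ?thesis .
  next
    case False
    with u have "u < 0" by simp
    then have "k z u = 0" for z by (simp add: k_def exponential_density_def)
    then have "f w u = 0" for w by (simp add: f_def)
    then have "t u = 0" by (simp add: t_def)
    then show ?thesis using \<open>u < 0\<close> by (simp add: pi_RSB_def)
  qed
  have "density lborel (\<lambda>w. ennreal (beta_density a (1 - a) w)) \<bind> Fmeas b
        = density lborel (\<lambda>u. ennreal (pi_RSB u a b))"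
  proof (rule measure_eqI)
    show "sets (density lborel (\<lambda>w. ennreal (beta_density a (1 - a) w)) \<bind> Fmeas b) =
          sets (density lborel (\<lambda>u. ennreal (pi_RSB u a b)))"
      by (subst sets_bind[where N=borel]) auto
  next
    fix A assume "A \<in> sets (density lborel (\<lambda>w. ennreal (beta_density a (1 - a) w)) \<bind> Fmeas b)"
    then have A[measurable]: "A \<in> sets borel" by (subst (asm) sets_bind[where N=borel]) auto
    have "emeasure (density lborel (\<lambda>w. ennreal (beta_density a (1 - a) w)) \<bind> Fmeas b) A
       = (\<integral>\<^sup>+w. ennreal (beta_density a (1 - a) w) * (\<integral>\<^sup>+z. ennreal (gamma_density b w z) *
            (\<integral>\<^sup>+v. ennreal (gamma_density z 1 v) *
               (\<integral>\<^sup>+u. ennreal (exponential_density v u) * indicator A u \<partial>lborel) \<partial>lborel) \<partial>lborel) \<partial>lborel)"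
      using A a b by (simp add: L_T0 L_F0 L_K)
    also have "... = (\<integral>\<^sup>+w. ennreal (beta_density a (1 - a) w) * (\<integral>\<^sup>+z. ennreal (gamma_density b w z) *
            (\<integral>\<^sup>+u. k z u * indicator A u \<partial>lborel) \<partial>lborel) \<partial>lborel)"
      unfolding k_def by (subst swap_int) (auto intro!: nn_integral_cong)
    also have "... = (\<integral>\<^sup>+w. ennreal (beta_density a (1 - a) w) * (\<integral>\<^sup>+u. f w u * indicator A u \<partial>lborel) \<partial>lborel)"
      unfolding f_def by (subst swap_int) (auto intro!: nn_integral_cong)
    also have "... = (\<integral>\<^sup>+u. t u * indicator A u \<partial>lborel)"
      unfolding t_def by (subst swap_int) auto
    also have "... = (\<integral>\<^sup>+u. ennreal (pi_RSB u a b) * indicator A u \<partial>lborel)"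
      by (intro nn_integral_cong_AE eventually_mono[OF AE_lborel_singleton[of 0]]) (simp add: t_eq)
    also have "... = emeasure (density lborel (\<lambda>u. ennreal (pi_RSB u a b))) A"
      using A by (subst emeasure_density) auto
    finally show "emeasure (density lborel (\<lambda>w. ennreal (beta_density a (1 - a) w)) \<bind> Fmeas b) A
        = emeasure (density lborel (\<lambda>u. ennreal (pi_RSB u a b))) A" .
  qed
  then show ?thesis unfolding Fmeas_def[abs_def] Kmeas_def[abs_def] .
qed


end
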